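(* Let $(Y,\nu,S)$ be a mixing Gibbs system with $Y\subseteq A^{\mathbb{Z}}$, and let $\mathcal{P}$ be the time-zero partition of $Y$ (by the value of the coordinate $y_0$). Then for every integer $p\ge0$, \[\sup_{N\ge1}\mathrm{I}_\nu\big(\mathcal{P}^{[-p;N+p)};\mathcal{P}^{[-N-p;p)}\big)<\infty.\]
   Context: A mixing Gibbs system: $A$ finite, $Y\subseteq A^{\mathbb{Z}}$ a topologically mixing subshift of finite type, $S$ the left shift, and $\nu$ the Gibbs measure associated to a Hölder continuous potential on $Y$ (Hölder w.r.t. $d(a,a')=\sum_n2^{-|n|}1_{\{a_n\ne a'_n\}}$). For $F\subseteq\mathbb{Z}$ finite, $\mathcal{P}^F=\bigvee_{n\in F}S^{-n}\mathcal{P}$; $[a;b)=\{a,\dots,b-1\}$. $\mathrm{I}_\nu$ denotes mutual information of partitions. *)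

theory Defs
  imports "HOL-Probability.Probability"
begin

definition shift :: "(int \<Rightarrow> 'a) \<Rightarrow> (int \<Rightarrow> 'a)" where
  "shift y = (\<lambda>n. y (n + 1))"

definition seq_space :: "(int \<Rightarrow> 'a) measure" where
  "seq_space = PiM UNIV (\<lambda>_. count_space UNIV)"

definition cyl :: "'a list \<Rightarrow> int \<Rightarrow> (int \<Rightarrow> 'a) set" where
  "cyl w m = {y. \<forall>i<length w. y (m + int i) = w ! i}"

definition is_SFT :: "(int \<Rightarrow> 'a::finite) set \<Rightarrow> bool" where
  "is_SFT Y \<longleftrightarrow> (\<exists>(L::nat) (F :: 'a list set).
      Y = {y. \<forall>m::int. map (\<lambda>i. y (m + int i)) [0..<L] \<notin> F})"

text \<open>Topological mixing of a subshift, stated on cylinders (a base of the topology):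
  for any two cylinders meeting Y, the n-th shift of one meets the other for all large n.\<close>
definition top_mixing :: "(int \<Rightarrow> 'a) set \<Rightarrow> bool" where
  "top_mixing Y \<longleftrightarrow> (\<forall>u v. Y \<inter> cyl u 0 \<noteq> {} \<longrightarrow> Y \<inter> cyl v 0 \<noteq> {} \<longrightarrow>
      (\<exists>N::nat. \<forall>n\<ge>N. Y \<inter> cyl u 0 \<inter> cyl v (int n) \<noteq> {}))"

definition seq_dist :: "(int \<Rightarrow> 'a) \<Rightarrow> (int \<Rightarrow> 'a) \<Rightarrow> real" where
  "seq_dist a a' = infsum (\<lambda>n::int. (1/2) ^ nat \<bar>n\<bar> * (if a n \<noteq> a' n then 1 else 0)) UNIV"

definition holder_on :: "(int \<Rightarrow> 'a) set \<Rightarrow> ((int \<Rightarrow> 'a) \<Rightarrow> real) \<Rightarrow> bool" where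
  "holder_on Y \<phi> \<longleftrightarrow> (\<exists>C \<alpha>. C \<ge> 0 \<and> 0 < \<alpha> \<and> \<alpha> \<le> 1 \<and>
      (\<forall>y\<in>Y. \<forall>y'\<in>Y. \<bar>\<phi> y - \<phi> y'\<bar> \<le> C * seq_dist y y' powr \<alpha>))"

definition gibbs_measure :: "(int \<Rightarrow> 'a) set \<Rightarrow> ((int \<Rightarrow> 'a) \<Rightarrow> real) \<Rightarrow> (int \<Rightarrow> 'a) measure \<Rightarrow> bool" where
  "gibbs_measure Y \<phi> \<nu> \<longleftrightarrow>
     sets \<nu> = sets seq_space \<and> prob_space \<nu> \<and>
     (AE y in \<nu>. y \<in> Y) \<and>
     (\<forall>B\<in>sets \<nu>. emeasure \<nu> (shift -` B \<inter> space \<nu>) = emeasure \<nu> B) \<and>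
     (\<exists>c P. c \<ge> 1 \<and> (\<forall>y\<in>Y. \<forall>n::nat. n \<ge> 1 \<longrightarrow>
        (let g = exp (- real n * P + (\<Sum>k<n. \<phi> ((shift ^^ k) y)));
             m = measure \<nu> (cyl (map (\<lambda>i. y (int i)) [0..<n]) 0)
         in g / c \<le> m \<and> m \<le> c * g)))"

text \<open>The partition P^F = \<Or>_{n\<in>F} S^{-n} P, for P the time-zero partition:
  its atoms are the sets {y. \<forall>n\<in>F. y n = w n}.\<close>
definition join_part :: "int set \<Rightarrow> (int \<Rightarrow> 'a) set set" where
  "join_part F = (\<lambda>w. {y. \<forall>n\<in>F. y n = w n}) ` (F \<rightarrow>\<^sub>E UNIV)"

definition mutual_info_part :: "'b measure \<Rightarrow> 'b set set \<Rightarrow> 'b set set \<Rightarrow> real" where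
  "mutual_info_part \<nu> \<P> \<Q> = (\<Sum>p\<in>\<P>. \<Sum>q\<in>\<Q>.
      let r = measure \<nu> (p \<inter> q) in
      if r = 0 then 0 else r * ln (r / (measure \<nu> p * measure \<nu> q)))"

abbreviation int_interval :: "int \<Rightarrow> int \<Rightarrow> int set" where
  "int_interval a b \<equiv> {a..<b}"

end

theory Submission
  imports Defs
begin

definition tr :: "int \<Rightarrow> (int \<Rightarrow> 'a) \<Rightarrow> (int \<Rightarrow> 'a)" where
  "tr a y = (\<lambda>n. y (n + a))"

definition atom :: "int set \<Rightarrow> (int \<Rightarrow> 'a) \<Rightarrow> (int \<Rightarrow> 'a) set" where
  "atom F w = {z. \<forall>n\<in>F. z n = w n}"

lemma funpow_shift: "(shift ^^ k) z = tr (int k) z"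
  by (induction k) (auto simp: tr_def shift_def algebra_simps fun_eq_iff)

lemma space_seq: "space seq_space = UNIV"
  by (simp add: seq_space_def space_PiM)

lemma sets_atom: "finite F \<Longrightarrow> atom F w \<in> sets seq_space"
proof -
  assume "finite F"
  have "atom F w = {x\<in>space seq_space. \<forall>n\<in>F. x n = w n}"
    by (simp add: atom_def space_seq)
  also have "\<dots> \<in> sets seq_space"
  proof (rule sets.sets_Collect_finite_All[OF _ \<open>finite F\<close>])
    fix n assume "n \<in> F"
    have "(\<lambda>x. x n) \<in> measurable seq_space (count_space UNIV)"
      unfolding seq_space_def by (rule measurable_component_singleton) simp
    then have "(\<lambda>x. x n) -` {w n} \<inter> space seq_space \<in> sets seq_space"
      by (rule measurable_sets) simp
    then show "{x\<in>space seq_space. x n = w n} \<in> sets seq_space"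
      by (simp add: space_seq vimage_def)
  qed
  finally show ?thesis .
qed

lemma cyl_eq_atom: "cyl w m = atom {m..<m + int (length w)} (\<lambda>j. w ! nat (j - m))"
proof (intro set_eqI iffI)
  fix z assume "z \<in> cyl w m"
  then show "z \<in> atom {m..<m + int (length w)} (\<lambda>j. w ! nat (j - m))"
    unfolding cyl_def atom_def
    by (auto, metis add.commute diff_add_cancel int_nat_eq nat_less_iff zless_add1_eq
          add_less_cancel_left diff_ge_0_iff_ge)
next
  fix z assume "z \<in> atom {m..<m + int (length w)} (\<lambda>j. w ! nat (j - m))"
  then show "z \<in> cyl w m"
    unfolding cyl_def atom_def by auto
qed

lemma sets_cyl: "cyl w m \<in> sets seq_space"
  unfolding cyl_eq_atom by (rule sets_atom) simp

lemma atom_interval: "atom {a..<a + int n} y = cyl (map (\<lambda>i. tr a y (int i)) [0..<n]) a"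
  unfolding cyl_eq_atom by (auto simp: atom_def tr_def)

lemma sum_shift_int: "(\<Sum>k<n. f (a + int k)) = (\<Sum>j\<in>{a..<a + int n}. (f j :: real))"
proof -
  have "bij_betw (\<lambda>k. a + int k) {..<n} {a..<a + int n}"
    by (rule bij_betwI[where g="\<lambda>j. nat (j - a)"]) auto
  then show ?thesis by (rule sum.reindex_bij_betw)
qed

lemma tr_tr: "tr k (tr a y) = tr (a + k) y"
  by (simp add: tr_def algebra_simps)

lemma finite_join_part: "finite F \<Longrightarrow> finite (join_part F :: (int \<Rightarrow> 'a::finite) set set)"
  unfolding join_part_def by (intro finite_imageI finite_PiE) auto

lemma join_part_atom: "U \<in> join_part F \<Longrightarrow> \<exists>w. U = atom F w"
  unfolding join_part_def atom_def by auto

lemma atom_mem: "U \<in> join_part F \<Longrightarrow> y \<in> U \<Longrightarrow> U = atom F y"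
  unfolding join_part_def atom_def by auto

lemma join_part_sets: "finite F \<Longrightarrow> U \<in> join_part F \<Longrightarrow> U \<in> sets seq_space"
  using join_part_atom sets_atom by blast

lemma join_part_disj: "U \<in> join_part F \<Longrightarrow> V \<in> join_part F \<Longrightarrow> U \<noteq> V \<Longrightarrow> U \<inter> V = {}"
  using atom_mem by blast

lemma join_part_cover: "(\<Union>V\<in>join_part F. U \<inter> V) = U"
proof (intro set_eqI iffI)
  fix y assume "y \<in> U"
  have "restrict y F \<in> F \<rightarrow>\<^sub>E UNIV" by simp
  moreover have "y \<in> {z. \<forall>n\<in>F. z n = restrict y F n}" by simp
  ultimately have "y \<in> \<Union> (join_part F)" unfolding join_part_def by blast
  then show "y \<in> (\<Union>V\<in>join_part F. U \<inter> V)" using \<open>y \<in> U\<close> by blast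
qed auto

lemma atom_Int: "atom F y \<inter> atom G y = atom (F \<union> G) y"
  unfolding atom_def by auto

lemma part_sum:
  fixes M :: "(int \<Rightarrow> 'a::finite) measure"
  assumes "sets M = sets seq_space" "finite F" "U \<in> sets M" and ps: "prob_space M"
  shows "(\<Sum>V\<in>join_part F. measure M (U \<inter> V)) = measure M U"
proof -
  interpret prob_space M by (rule ps)
  have "measure M (\<Union>V\<in>join_part F. U \<inter> V) = (\<Sum>V\<in>join_part F. measure M (U \<inter> V))"
  proof (rule measure_finite_Union[OF finite_join_part[OF assms(2)]])
    show "(\<inter>) U ` join_part F \<subseteq> sets M"
      using join_part_sets[OF assms(2)] assms(1,3) by auto
    show "disjoint_family_on ((\<inter>) U) (join_part F)"
      unfolding disjoint_family_on_def using join_part_disj by blast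
  qed (simp add: emeasure_eq_measure)
  then show ?thesis using join_part_cover[of U F] by simp
qed

lemma S_split:
  fixes g :: "int \<Rightarrow> real"
  assumes "a \<le> b" "b \<le> d"
  shows "(\<Sum>j\<in>{a..<d}. g j) = (\<Sum>j\<in>{a..<b}. g j) + (\<Sum>j\<in>{b..<d}. g j)"
proof -
  have "{a..<d} = {a..<b} \<union> {b..<d}" using assms by auto
  then show ?thesis by (simp add: sum.union_disjoint ivl_disj_int_two(3))
qed

theorem mainTheorem13:
  fixes Y :: "(int \<Rightarrow> 'a::finite) set"
    and \<phi> :: "(int \<Rightarrow> 'a) \<Rightarrow> real"
    and \<nu> :: "(int \<Rightarrow> 'a) measure"
    and p :: int
  assumes "is_SFT Y" and "top_mixing Y"
    and "holder_on Y \<phi>"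
    and "gibbs_measure Y \<phi> \<nu>"
    and "p \<ge> 0"
  shows "\<exists>B::real. \<forall>N::int. N \<ge> 1 \<longrightarrow>
           mutual_info_part \<nu> (join_part {-p..<N+p}) (join_part {-N-p..<p}) \<le> B"
proof -
  from assms(4) have sets_nu: "sets \<nu> = sets seq_space" and ps: "prob_space \<nu>"
    and AEY: "AE y in \<nu>. y \<in> Y"
    and inv: "\<forall>B\<in>sets \<nu>. emeasure \<nu> (shift -` B \<inter> space \<nu>) = emeasure \<nu> B"
    unfolding gibbs_measure_def by auto
  from assms(4) obtain c P where c1: "c \<ge> 1" and gib: "\<And>y n. y \<in> Y \<Longrightarrow> n \<ge> 1 \<Longrightarrow>
        exp (- real n * P + (\<Sum>k<n. \<phi> ((shift ^^ k) y))) / c \<le> measure \<nu> (cyl (map (\<lambda>i. y (int i)) [0..<n]) 0) \<and>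
        measure \<nu> (cyl (map (\<lambda>i. y (int i)) [0..<n]) 0) \<le> c * exp (- real n * P + (\<Sum>k<n. \<phi> ((shift ^^ k) y)))"
    unfolding gibbs_measure_def Let_def by blast
  interpret prob_space \<nu> by (rule ps)
  have space_nu: "space \<nu> = UNIV" using sets_eq_imp_space_eq[OF sets_nu] space_seq by simp
  from assms(1) obtain L Fb where Yd: "Y = {y. \<forall>m::int. map (\<lambda>i. y (m + int i)) [0..<L] \<notin> Fb}"
    unfolding is_SFT_def by blast
  have trY: "tr a y \<in> Y" if "y \<in> Y" for a y
  proof -
    have h: "\<forall>m::int. map (\<lambda>i. y (m + int i)) [0..<L] \<notin> Fb" using that Yd by blast
    have "map (\<lambda>i. tr a y (m + int i)) [0..<L] \<notin> Fb" for m
    proof -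
      have "map (\<lambda>i. tr a y (m + int i)) [0..<L] = map (\<lambda>i. y ((m + a) + int i)) [0..<L]"
        by (simp add: tr_def algebra_simps)
      then show ?thesis using h by metis
    qed
    then show ?thesis using Yd by blast
  qed
  have cyl_step: "measure \<nu> (cyl w (m+1)) = measure \<nu> (cyl w m)" for w m
  proof -
    have "shift -` cyl w m \<inter> space \<nu> = cyl w (m+1)"
      by (auto simp: space_nu cyl_def shift_def algebra_simps)
    then show ?thesis using inv sets_cyl[of w m] sets_nu by (metis measure_def)
  qed
  have cyl_inv: "measure \<nu> (cyl w m) = measure \<nu> (cyl w 0)" for w m
  proof (induction m rule: int_induct[where k=0])
    case base show ?case by simp
  next
    case (step1 i) then show ?case using cyl_step[of w i] by simp
  next
    case (step2 i) then show ?case using cyl_step[of w "i-1"] by simp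
  qed
  define S where "S a b y = (\<Sum>j\<in>{a..<b}. \<phi> (tr j y))" for a b y
  have gatom: "exp (- of_int (b-a) * P + S a b y) / c \<le> measure \<nu> (atom {a..<b} y) \<and>
       measure \<nu> (atom {a..<b} y) \<le> c * exp (- of_int (b-a) * P + S a b y)"
    if "y \<in> Y" "a < b" for a b y
  proof -
    define n where "n = nat (b - a)"
    have bn: "b = a + int n" "n \<ge> 1" using that by (auto simp: n_def)
    have m: "measure \<nu> (atom {a..<b} y) = measure \<nu> (cyl (map (\<lambda>i. tr a y (int i)) [0..<n]) 0)"
      using atom_interval[of a n y] cyl_inv bn by simp
    have s: "(\<Sum>k<n. \<phi> ((shift ^^ k) (tr a y))) = S a b y"
      using sum_shift_int[of "\<lambda>j. \<phi> (tr j y)" a n]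
      by (simp add: funpow_shift tr_tr S_def bn(1))
    have rn: "real n = of_int (b - a)" using that by (simp add: n_def)
    show ?thesis using gib[OF trY[of y a, OF that(1)] bn(2)] m s rn by simp
  qed
  define f where "f a = (if measure \<nu> (cyl [a] 0) > 0 then measure \<nu> (cyl [a] 0) else 1)" for a :: 'a
  define \<mu> where "\<mu> = Min (range f)"
  have "\<mu> \<in> range f" unfolding \<mu>_def by (rule Min_in) auto
  then have mu_pos: "\<mu> > 0" by (auto simp: f_def)
  have phi_low: "- \<phi> z \<le> ln c - P - ln \<mu>" if "z \<in> Y" for z
  proof -
    have g: "exp (-P + \<phi> z) / c \<le> measure \<nu> (cyl [z 0] 0)" "measure \<nu> (cyl [z 0] 0) \<le> c * exp (-P + \<phi> z)"
      using gib[OF that, of 1] by simp_all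
    have mpos: "measure \<nu> (cyl [z 0] 0) > 0" using g(1) c1
      by (smt (verit) divide_pos_pos exp_gt_zero)
    have "\<mu> \<le> f (z 0)" unfolding \<mu>_def by (rule Min_le) auto
    then have "\<mu> \<le> measure \<nu> (cyl [z 0] 0)" using mpos by (simp add: f_def)
    then have "\<mu> \<le> c * exp (-P + \<phi> z)" using g(2) by linarith
    then have "ln \<mu> \<le> ln (c * exp (-P + \<phi> z))" using mu_pos c1 by simp
    also have "\<dots> = ln c + (-P + \<phi> z)" using c1 by (simp add: ln_mult)
    finally show ?thesis by linarith
  qed
  define K where "K = max 0 (3 * ln c + 2 * of_int p * (ln c - ln \<mu>))"
  show ?thesis
  proof (intro exI allI impI)
    fix N :: int assume N: "N \<ge> 1"
    define F1 where "F1 = {-p..<N+p}"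
    define F2 where "F2 = {-N-p..<p}"
    have fin: "finite F1" "finite F2" by (simp_all add: F1_def F2_def)
    have termb: "(let r = measure \<nu> (U \<inter> V) in if r = 0 then 0 else r * ln (r / (measure \<nu> U * measure \<nu> V)))
        \<le> K * measure \<nu> (U \<inter> V)"
      if U: "U \<in> join_part F1" and V: "V \<in> join_part F2" for U V
    proof (cases "measure \<nu> (U \<inter> V) = 0")
      case True then show ?thesis by (simp add: Let_def)
    next
      case False
      have UVs: "U \<inter> V \<in> sets \<nu>" using join_part_sets[OF fin(1) U] join_part_sets[OF fin(2) V] sets_nu by auto
      obtain y where y: "y \<in> U" "y \<in> V" "y \<in> Y"
      proof (rule ccontr)
        assume "\<not> thesis"
        with that have "AE x in \<nu>. x \<notin> U \<inter> V" using AEY by (auto elim: eventually_mono)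
        then have "emeasure \<nu> (U \<inter> V) = 0"
          using AE_iff_measurable[OF UVs, of "\<lambda>x. x \<notin> U \<inter> V"] space_nu by auto
        then show False using False by (simp add: measure_def)
      qed
      have Ua: "U = atom F1 y" using atom_mem[OF U y(1)] .
      have Va: "V = atom F2 y" using atom_mem[OF V y(2)] .
      have UVa: "U \<inter> V = atom {-N-p..<N+p} y"
      proof -
        have "F1 \<union> F2 = {-N-p..<N+p}" using N assms(5) by (auto simp: F1_def F2_def)
        then show ?thesis using Ua Va atom_Int by metis
      qed
      define eU where "eU = - of_int (N+p - -p) * P + S (-p) (N+p) y"
      define eV where "eV = - of_int (p - (-N-p)) * P + S (-N-p) p y"
      define eUV where "eUV = - of_int (N+p - (-N-p)) * P + S (-N-p) (N+p) y"
      have bU: "exp eU / c \<le> measure \<nu> U" using gatom[OF y(3), of "-p" "N+p"] N assms(5) Ua F1_def eU_def by simp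
      have bV: "exp eV / c \<le> measure \<nu> V" using gatom[OF y(3), of "-N-p" "p"] N assms(5) Va F2_def eV_def by simp
      have bUV: "measure \<nu> (U \<inter> V) \<le> c * exp eUV" using gatom[OF y(3), of "-N-p" "N+p"] N assms(5) UVa eUV_def by simp
      have pU: "exp eU / c > 0" "exp eV / c > 0" using c1 by simp_all
      have r_pos: "measure \<nu> (U \<inter> V) > 0" using False measure_nonneg[of \<nu> "U \<inter> V"] by linarith
      have lU: "eU - ln c \<le> ln (measure \<nu> U)"
      proof -
        have "ln (exp eU / c) \<le> ln (measure \<nu> U)" using bU pU by simp
        then show ?thesis using c1 by (simp add: ln_div)
      qed
      have lV: "eV - ln c \<le> ln (measure \<nu> V)"
      proof -
        have "ln (exp eV / c) \<le> ln (measure \<nu> V)" using bV pU by simp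
        then show ?thesis using c1 by (simp add: ln_div)
      qed
      have lUV: "ln (measure \<nu> (U \<inter> V)) \<le> ln c + eUV"
      proof -
        have "ln (measure \<nu> (U \<inter> V)) \<le> ln (c * exp eUV)" using bUV r_pos by simp
        then show ?thesis using c1 by (simp add: ln_mult)
      qed
      have sp1: "S (-N-p) (N+p) y = S (-N-p) p y + S p (N+p) y"
        unfolding S_def by (rule S_split) (use N assms(5) in auto)
      have sp2: "S (-p) (N+p) y = S (-p) p y + S p (N+p) y"
        unfolding S_def by (rule S_split) (use N assms(5) in auto)
      have e: "eUV - eU - eV = 2 * of_int p * P - S (-p) p y"
        unfolding eU_def eV_def eUV_def sp1 sp2 by (simp add: algebra_simps)
      have sb: "- S (-p) p y \<le> 2 * of_int p * (ln c - P - ln \<mu>)"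
      proof -
        have "(\<Sum>j\<in>{-p..<p}. - \<phi> (tr j y)) \<le> of_nat (card {-p..<p}) * (ln c - P - ln \<mu>)"
          by (rule sum_bounded_above) (use phi_low trY y(3) in blast)
        moreover have "real (card {-p..<p}) = 2 * of_int p" using assms(5) by simp
        ultimately show ?thesis by (simp add: S_def sum_negf)
      qed
      have tot: "2 * of_int p * P + 2 * of_int p * (ln c - P - ln \<mu>) = 2 * of_int p * (ln c - ln \<mu>)"
        by (simp add: algebra_simps)
      have lnb: "ln (measure \<nu> (U \<inter> V)) - ln (measure \<nu> U) - ln (measure \<nu> V) \<le> K"
        using lU lV lUV e sb tot unfolding K_def by linarith
      have pos2: "measure \<nu> U > 0" "measure \<nu> V > 0" using bU bV pU by linarith+
      have "ln (measure \<nu> (U \<inter> V) / (measure \<nu> U * measure \<nu> V))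
          = ln (measure \<nu> (U \<inter> V)) - ln (measure \<nu> U) - ln (measure \<nu> V)"
        using r_pos pos2 by (simp add: ln_div ln_mult)
      then have "measure \<nu> (U \<inter> V) * ln (measure \<nu> (U \<inter> V) / (measure \<nu> U * measure \<nu> V))
          \<le> measure \<nu> (U \<inter> V) * K" using lnb r_pos by (simp add: mult_left_mono)
      then show ?thesis using False by (simp add: Let_def mult.commute)
    qed
    have "mutual_info_part \<nu> (join_part F1) (join_part F2)
        \<le> (\<Sum>U\<in>join_part F1. \<Sum>V\<in>join_part F2. K * measure \<nu> (U \<inter> V))"
      unfolding mutual_info_part_def by (intro sum_mono) (rule termb)
    also have "\<dots> = K * (\<Sum>U\<in>join_part F1. \<Sum>V\<in>join_part F2. measure \<nu> (U \<inter> V))"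
      by (simp add: sum_distrib_left)
    also have "\<dots> = K * (\<Sum>U\<in>join_part F1. measure \<nu> (UNIV \<inter> U))"
    proof -
      have "(\<Sum>V\<in>join_part F2. measure \<nu> (U \<inter> V)) = measure \<nu> (UNIV \<inter> U)" if "U \<in> join_part F1" for U
        using part_sum[OF sets_nu fin(2) _ ps, of U] join_part_sets[OF fin(1) that] sets_nu by simp
      then show ?thesis by simp
    qed
    also have "\<dots> = K * measure \<nu> UNIV"
      using part_sum[OF sets_nu fin(1) _ ps, of UNIV] space_nu sets.top[of \<nu>] by simp
    also have "\<dots> = K" using prob_space space_nu by simp
    finally show "mutual_info_part \<nu> (join_part {-p..<N+p}) (join_part {-N-p..<p}) \<le> K"
      by (simp add: F1_def F2_def)
  qed
qed

end
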